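(* There is a universal constant $c>0$ such that the following holds. Let $\gamma \in (0, 1/6]$, let $n \geq 2$ be an integer, and let $\eta \geq \eta_1 := \max\{n, \frac{32}{\gamma^2}\log(3/\gamma)\}$. Then there exist a dimension $d$ and a dataset $x_1,\dots,x_n\in\mathbb{R}^d$ with $\|x_i\| \le 1$ for all $i$, linearly separable with maximum margin exactly $\gamma$, such that gradient descent with step size $\eta$ on this dataset has transition time $\tau := \min\{t \geq 0 : F(w_t) \leq 1/(8\eta)\}$ satisfying $\tau \geq c\left(\frac{n}{\gamma} + \frac{1}{\gamma^2}\right)$.
   Context: All labels are $+1$. Linear separability: some $w$ has $\langle w,x_i\rangle>0$ for all $i$. Maximum margin: $\max_{\|w\|=1}\min_i\langle w,x_i\rangle$. Loss $F(w) = \frac{1}{n}\sum_{i=1}^n \log(1+\exp(-\langle w, x_i\rangle))$. Gradient descent with constant step size $\eta$: $w_0 = 0$, $w_{t+1} = w_t - \eta\nabla F(w_t)$. *)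

theory Defs
  imports "HOL-Analysis.Analysis"
begin

text \<open>Vectors in R^d are represented as functions nat => real, only coordinates j < d matter.
  A dataset x_1..x_n is a function x :: nat => (nat => real), indices i < n (0-based).\<close>

definition ip :: "nat \<Rightarrow> (nat \<Rightarrow> real) \<Rightarrow> (nat \<Rightarrow> real) \<Rightarrow> real" where
  "ip d u v = (\<Sum>j<d. u j * v j)"

definition vnorm :: "nat \<Rightarrow> (nat \<Rightarrow> real) \<Rightarrow> real" where
  "vnorm d u = sqrt (ip d u u)"

definition logloss :: "nat \<Rightarrow> nat \<Rightarrow> (nat \<Rightarrow> nat \<Rightarrow> real) \<Rightarrow> (nat \<Rightarrow> real) \<Rightarrow> real" where
  "logloss d n x w = (1 / real n) * (\<Sum>i<n. ln (1 + exp (- ip d w (x i))))"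

definition loss_grad :: "nat \<Rightarrow> nat \<Rightarrow> (nat \<Rightarrow> nat \<Rightarrow> real) \<Rightarrow> (nat \<Rightarrow> real) \<Rightarrow> (nat \<Rightarrow> real)" where
  "loss_grad d n x w = (\<lambda>j. if j < d then
      (1 / real n) * (\<Sum>i<n. - x i j / (1 + exp (ip d w (x i)))) else 0)"

fun gd :: "nat \<Rightarrow> nat \<Rightarrow> (nat \<Rightarrow> nat \<Rightarrow> real) \<Rightarrow> real \<Rightarrow> nat \<Rightarrow> (nat \<Rightarrow> real)" where
  "gd d n x \<eta> 0 = (\<lambda>j. 0)"
| "gd d n x \<eta> (Suc t) = (\<lambda>j. gd d n x \<eta> t j - \<eta> * loss_grad d n x (gd d n x \<eta> t) j)"

text \<open>Linear separability with all labels +1.\<close>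
definition lin_sep :: "nat \<Rightarrow> nat \<Rightarrow> (nat \<Rightarrow> nat \<Rightarrow> real) \<Rightarrow> bool" where
  "lin_sep d n x = (\<exists>w. \<forall>i<n. ip d w (x i) > 0)"

definition max_margin :: "nat \<Rightarrow> nat \<Rightarrow> (nat \<Rightarrow> nat \<Rightarrow> real) \<Rightarrow> real" where
  "max_margin d n x = (SUP w\<in>{w. vnorm d w = 1}. Min ((\<lambda>i. ip d w (x i)) ` {..<n}))"

end

theory Submission
  imports Defs
begin


definition sg :: "real \<Rightarrow> real" where "sg z = 1 / (1 + exp z)"

lemma sg_pos: "0 < sg z" unfolding sg_def by (simp add: add_pos_pos)
lemma sg_le1: "sg z \<le> 1" unfolding sg_def by (simp add: add_pos_pos)
lemma sg_0: "sg 0 = 1/2" unfolding sg_def by simp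

lemma sg_small: assumes "z \<ge> K" "K > 0" shows "sg z \<le> 1 / K"
proof -
  have "1 + z \<le> exp z" by (rule exp_ge_add_one_self)
  hence "K \<le> 1 + exp z" using assms by linarith
  thus ?thesis unfolding sg_def using assms by (simp add: frac_le)
qed

lemma sg_big: assumes "z \<le> -K" "K > 0" shows "1 - sg z \<le> 1 / K"
proof -
  have p: "1 + exp z \<noteq> 0" using exp_gt_zero[of z] by linarith
  have e1: "1 - sg z = exp z / (1 + exp z)" unfolding sg_def using p by (simp add: field_simps)
  have e2: "sg (-z) = exp z / (1 + exp z)" unfolding sg_def exp_minus using p
    by (simp add: field_simps)
  have "1 - sg z = sg (-z)" using e1 e2 by simp
  also have "\<dots> \<le> 1/K" using assms by (intro sg_small) auto
  finally show ?thesis .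
qed

definition vec2 :: "real \<Rightarrow> real \<Rightarrow> nat \<Rightarrow> real" where
  "vec2 u v = (\<lambda>j. if j = 0 then u else if j = 1 then v else 0)"

lemma ip2: "ip 2 w z = w 0 * z 0 + w 1 * z 1"
  unfolding ip_def by (simp add: eval_nat_numeral)

lemma sum_split:
  assumes "na \<le> n"
  shows "(\<Sum>i<n. f (if i < na then a else b)) = real na * f a + real (n - na) * f b"
proof -
  have e: "{..<n} = {..<na} \<union> {na..<n}" using assms by auto
  have "(\<Sum>i<n. f (if i < na then a else b)) =
     (\<Sum>i<na. f (if i < na then a else b)) + (\<Sum>i\<in>{na..<n}. f (if i < na then a else b))"
    unfolding e by (rule sum.union_disjoint) auto
  also have "\<dots> = (\<Sum>i<na. f a) + (\<Sum>i\<in>{na..<n}. f b)" by simp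
  finally show ?thesis by simp
qed

lemma logloss_big:
  fixes x :: "nat \<Rightarrow> nat \<Rightarrow> real"
  assumes "j < n" "ip d w (x j) \<le> 0" "\<eta> \<ge> real n" "n \<ge> 1"
  shows "logloss d n x w > 1 / (8 * \<eta>)"
proof -
  have nn: "\<And>i. 0 \<le> ln (1 + exp (- ip d w (x i)))" by simp
  have "ln 2 \<le> ln (1 + exp (- ip d w (x j)))"
  proof -
    have "1 \<le> exp (- ip d w (x j))" using assms(2) by simp
    thus ?thesis by (subst ln_le_cancel_iff) (simp_all add: add_pos_pos)
  qed
  also have "\<dots> \<le> (\<Sum>i<n. ln (1 + exp (- ip d w (x i))))"
    using assms(1) by (intro member_le_sum) auto
  finally have s: "ln 2 \<le> (\<Sum>i<n. ln (1 + exp (- ip d w (x i))))" .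
  have l2: "2/3 \<le> ln (2::real)" by (rule ln2_ge_two_thirds)
  have "1 / (8 * \<eta>) \<le> 1 / (8 * real n)" using assms by (simp add: frac_le)
  also have "\<dots> < ln 2 / real n" using l2 assms by (simp add: field_simps)
  also have "\<dots> \<le> logloss d n x w" unfolding logloss_def using s assms
    by (simp add: divide_right_mono)
  finally show ?thesis .
qed

definition xx :: "nat \<Rightarrow> (nat \<Rightarrow> real) \<Rightarrow> (nat \<Rightarrow> real) \<Rightarrow> nat \<Rightarrow> nat \<Rightarrow> real" where
  "xx na a b = (\<lambda>i::nat. if i < na then a else b)"
definition "Sa n na a b \<eta> t = (\<Sum>k<t. sg (ip 2 (gd 2 n (xx na a b) \<eta> k) a))"
definition "Sb n na a b \<eta> t = (\<Sum>k<t. sg (ip 2 (gd 2 n (xx na a b) \<eta> k) b))"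

context
  fixes n na :: nat and a b :: "nat \<Rightarrow> real" and \<eta> :: real
  assumes nna: "na \<le> n" and npos: "0 < n"
    and asupp: "\<And>j. j \<ge> 2 \<Longrightarrow> a j = 0" and bsupp: "\<And>j. j \<ge> 2 \<Longrightarrow> b j = 0"
begin


lemma grad_formula:
  "loss_grad 2 n (xx na a b) w j = - (real na / real n * sg (ip 2 w a) * a j
     + real (n - na) / real n * sg (ip 2 w b) * b j)"
proof (cases "j < 2")
  case True
  have g: "loss_grad 2 n (xx na a b) w j = (1 / real n) * (\<Sum>i<n. - (xx na a b) i j / (1 + exp (ip 2 w ((xx na a b) i))))"
    using True by (simp add: loss_grad_def)
  have "(\<Sum>i<n. - (xx na a b) i j / (1 + exp (ip 2 w ((xx na a b) i)))) =
     (\<Sum>i<n. (\<lambda>z. - z j * sg (ip 2 w z)) (if i < na then a else b))"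
    unfolding xx_def sg_def by (intro sum.cong) auto
  also have "\<dots> = real na * (- a j * sg (ip 2 w a)) + real (n - na) * (- b j * sg (ip 2 w b))"
    using sum_split[OF nna, of "\<lambda>z. - z j * sg (ip 2 w z)" a b] by simp
  finally have S: "(\<Sum>i<n. - (xx na a b) i j / (1 + exp (ip 2 w ((xx na a b) i)))) = real na * (- a j * sg (ip 2 w a)) + real (n - na) * (- b j * sg (ip 2 w b))" .
  show ?thesis unfolding g S using npos by (simp add: field_simps)
next
  case False thus ?thesis using asupp bsupp by (simp add: loss_grad_def)
qed

lemma gd_formula:
  "gd 2 n (xx na a b) \<eta> t j = \<eta> * (real na / real n * (Sa n na a b \<eta>) t * a j + real (n - na) / real n * (Sb n na a b \<eta>) t * b j)"
proof (induction t arbitrary: j)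
  case 0 thus ?case by (simp add: Sa_def Sb_def)
next
  case (Suc t)
  show ?case
    by (simp only: gd.simps grad_formula Suc Sa_def Sb_def sum.lessThan_Suc)
       (simp add: algebra_simps)
qed

lemma Sa_ge: "t \<ge> 1 \<Longrightarrow> (Sa n na a b \<eta>) t \<ge> 1/2"
proof -
  assume "t \<ge> 1"
  then obtain s where t: "t = Suc s" by (cases t) auto
  have "(Sa n na a b \<eta>) t = sg (ip 2 (gd 2 n (xx na a b) \<eta> 0) a) + (\<Sum>k<s. sg (ip 2 (gd 2 n (xx na a b) \<eta> (Suc k)) a))"
    unfolding Sa_def t by (rule sum.lessThan_Suc_shift)
  moreover have "sg (ip 2 (gd 2 n (xx na a b) \<eta> 0) a) = 1/2" by (simp add: ip_def sg_0)
  moreover have "0 \<le> (\<Sum>k<s. sg (ip 2 (gd 2 n (xx na a b) \<eta> (Suc k)) a))"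
    by (intro sum_nonneg) (simp add: sg_pos less_imp_le)
  ultimately show ?thesis by simp
qed

lemma Sb_le: "(Sb n na a b \<eta>) t \<le> real t"
proof -
  have "(Sb n na a b \<eta>) t \<le> (\<Sum>k<t. 1)" unfolding Sb_def by (intro sum_mono) (rule sg_le1)
  thus ?thesis by simp
qed


end

lemma vec2_0[simp]: "vec2 u v 0 = u" and vec2_1[simp]: "vec2 u v (Suc 0) = v"
  and vec2_ge: "j \<ge> 2 \<Longrightarrow> vec2 u v j = 0"
  by (auto simp: vec2_def)
lemma vec2_one[simp]: "vec2 u v 1 = v" by (simp add: vec2_def)

lemma margin_formula:
  assumes "na \<le> n" "0 < n"
  shows "ip 2 (gd 2 n (xx na (vec2 g1 a1) (vec2 g2 b1)) \<eta> t) z =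
    \<eta> * (real na / real n * Sa n na (vec2 g1 a1) (vec2 g2 b1) \<eta> t * (g1 * z 0 + a1 * z 1)
       + real (n - na) / real n * Sb n na (vec2 g1 a1) (vec2 g2 b1) \<eta> t * (g2 * z 0 + b1 * z 1))"
proof -
  have h1: "\<And>j. 2 \<le> j \<Longrightarrow> vec2 g1 a1 j = 0" by (simp add: vec2_ge)
  have h2: "\<And>j. 2 \<le> j \<Longrightarrow> vec2 g2 b1 j = 0" by (simp add: vec2_ge)
  note G = gd_formula[OF assms h1 h2]
  have g0: "gd 2 n (xx na (vec2 g1 a1) (vec2 g2 b1)) \<eta> t 0 = \<eta> * (real na / real n * Sa n na (vec2 g1 a1) (vec2 g2 b1) \<eta> t * g1 + real (n - na) / real n * Sb n na (vec2 g1 a1) (vec2 g2 b1) \<eta> t * g2)"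
    using G[where \<eta>=\<eta> and t=t and j=0] by simp
  have g1: "gd 2 n (xx na (vec2 g1 a1) (vec2 g2 b1)) \<eta> t 1 = \<eta> * (real na / real n * Sa n na (vec2 g1 a1) (vec2 g2 b1) \<eta> t * a1 + real (n - na) / real n * Sb n na (vec2 g1 a1) (vec2 g2 b1) \<eta> t * b1)"
    using G[where \<eta>=\<eta> and t=t and j=1] by simp
  show ?thesis
  unfolding ip2 g0 g1 by (simp add: algebra_simps add_divide_distrib)
qed

lemma vnorm2: "vnorm 2 w = sqrt (w 0 ^ 2 + w 1 ^ 2)"
  unfolding vnorm_def ip2 by (simp add: power2_eq_square)

lemma maxmargin:
  assumes "1 \<le> na" "na < n" "g > 0" "al > 0" "be > 0"
  shows "max_margin 2 n (xx na (vec2 g al) (vec2 g (-be))) = g"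
proof -
  let ?a = "vec2 g al" and ?b = "vec2 g (-be)"
  have img: "(\<lambda>i. ip 2 w (xx na ?a ?b i)) ` {..<n} = {ip 2 w ?a, ip 2 w ?b}" for w
  proof
    show "(\<lambda>i. ip 2 w (xx na ?a ?b i)) ` {..<n} \<subseteq> {ip 2 w ?a, ip 2 w ?b}"
      unfolding xx_def by auto
    have "ip 2 w ?a = (\<lambda>i. ip 2 w (xx na ?a ?b i)) 0" using assms by (simp add: xx_def)
    moreover have "ip 2 w ?b = (\<lambda>i. ip 2 w (xx na ?a ?b i)) (n-1)"
    proof -
      have "\<not> (n - 1 < na)" using assms by arith
      thus ?thesis by (simp add: xx_def)
    qed
    ultimately show "{ip 2 w ?a, ip 2 w ?b} \<subseteq> (\<lambda>i. ip 2 w (xx na ?a ?b i)) ` {..<n}"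
      using assms by auto
  qed
  have ub: "min (ip 2 w ?a) (ip 2 w ?b) \<le> g" if "vnorm 2 w = 1" for w
  proof -
    have w: "w 0 ^ 2 + w 1 ^ 2 = 1" using that unfolding vnorm2
      by (metis real_sqrt_eq_1_iff)
    have "\<bar>w 0\<bar> \<le> 1"
    proof (rule ccontr)
      assume "\<not> \<bar>w 0\<bar> \<le> 1"
      hence "1 < \<bar>w 0\<bar> * \<bar>w 0\<bar>" by (intro less_1_mult) auto
      moreover have "\<bar>w 0\<bar> * \<bar>w 0\<bar> = w 0 ^ 2" by (simp add: power2_eq_square)
      moreover have "0 \<le> w 1 ^ 2" by simp
      ultimately show False using w by linarith
    qed
    hence "w 0 \<le> 1" by linarith
    hence "g * w 0 \<le> g * 1" using assms by (intro mult_left_mono) auto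
    hence w0: "g * w 0 \<le> g" by simp
    have e: "be * ip 2 w ?a + al * ip 2 w ?b = (al + be) * (g * w 0)"
      unfolding ip2 by (simp add: algebra_simps)
    have m1: "be * min (ip 2 w ?a) (ip 2 w ?b) \<le> be * ip 2 w ?a"
      using assms by (intro mult_left_mono) auto
    have m2: "al * min (ip 2 w ?a) (ip 2 w ?b) \<le> al * ip 2 w ?b"
      using assms by (intro mult_left_mono) auto
    have "(al + be) * min (ip 2 w ?a) (ip 2 w ?b) \<le> be * ip 2 w ?a + al * ip 2 w ?b"
      using m1 m2 by (simp only: distrib_right)
    also have "\<dots> \<le> (al + be) * g" unfolding e using w0 assms by simp
    finally show ?thesis using assms by (simp only: mult_le_cancel_left_pos add_pos_pos)
  qed
  have att: "vnorm 2 (vec2 1 0) = 1" unfolding vnorm2 by simp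
  have att2: "min (ip 2 (vec2 1 0) ?a) (ip 2 (vec2 1 0) ?b) = g" unfolding ip2 by simp
  show ?thesis unfolding max_margin_def img
  proof (rule cSup_eq_maximum)
    have m: "Min {ip 2 w ?a, ip 2 w ?b} = min (ip 2 w ?a) (ip 2 w ?b)" for w by simp
    show "g \<in> (\<lambda>w. Min {ip 2 w ?a, ip 2 w ?b}) ` {w. vnorm 2 w = 1}"
      by (rule image_eqI[where x="vec2 1 0"]) (simp_all only: m att att2 mem_Collect_eq)
    show "x \<le> g" if "x \<in> (\<lambda>w. Min {ip 2 w ?a, ip 2 w ?b}) ` {w. vnorm 2 w = 1}" for x
      using that ub unfolding m by blast
  qed
qed

lemma vnorm_vec2: "vnorm 2 (vec2 u v) = sqrt (u^2 + v^2)" by (simp add: vnorm2)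





lemma case1:
  assumes g: "0 < \<gamma>" "\<gamma> \<le> 1/6" and n: "n \<ge> 2" and eta: "\<eta> \<ge> real n"
    and big: "1 \<le> real n * \<gamma>"
  shows "\<exists>(d::nat) (x::nat \<Rightarrow> nat \<Rightarrow> real).
           (\<forall>i<n. vnorm d (x i) \<le> 1) \<and>
           lin_sep d n x \<and>
           max_margin d n x = \<gamma> \<and>
           (\<forall>t::nat. logloss d n x (gd d n x \<eta> t) \<le> 1 / (8 * \<eta>) \<longrightarrow>
              real t \<ge> 1/1024 * (real n / \<gamma> + 1 / \<gamma>^2))"
proof -
  define na where "na = n - 1"
  define a where "a = vec2 \<gamma> (1/2)"
  define b where "b = vec2 \<gamma> (-\<gamma>)"
  define x where "x = xx na a b"
  have na: "1 \<le> na" "na < n" "na \<le> n" "0 < n" "n - na = 1" using n by (auto simp: na_def)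
  have "\<gamma>^2 \<le> (1/6)^2" using g by (intro power_mono) auto
  hence g2: "\<gamma>^2 \<le> 1/36" by (simp add: power2_eq_square)
  have norms: "\<forall>i<n. vnorm 2 (x i) \<le> 1"
  proof (intro allI impI)
    fix i assume "i < n"
    have "\<gamma>^2 + (1/2)^2 \<le> 1" "\<gamma>^2 + (-\<gamma>)^2 \<le> 1" using g2 by (simp_all add: power2_eq_square)
    thus "vnorm 2 (x i) \<le> 1" unfolding x_def xx_def a_def b_def by (auto simp: vnorm_vec2)
  qed
  have ls: "lin_sep 2 n x"
    unfolding lin_sep_def
    by (rule exI[where x="vec2 1 0"]) (auto simp: x_def xx_def a_def b_def ip2 g)
  have mm: "max_margin 2 n x = \<gamma>" unfolding x_def a_def b_def
    by (rule maxmargin) (use na g in auto)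
  have conv: "real t \<ge> 1/1024 * (real n / \<gamma> + 1 / \<gamma>^2)"
    if L: "logloss 2 n x (gd 2 n x \<eta> t) \<le> 1 / (8 * \<eta>)" for t
  proof -
    have xb: "x (n-1) = b" unfolding x_def xx_def na_def by simp
    have Bpos: "ip 2 (gd 2 n x \<eta> t) b > 0"
    proof (rule ccontr)
      assume "\<not> ?thesis"
      hence "logloss 2 n x (gd 2 n x \<eta> t) > 1 / (8 * \<eta>)"
        using xb na eta by (intro logloss_big[where j="n-1"]) auto
      thus False using L by linarith
    qed
    define s1 where "s1 = Sa n na a b \<eta> t"
    define s2 where "s2 = Sb n na a b \<eta> t"
    have sup: "\<And>j. 2 \<le> j \<Longrightarrow> a j = 0" "\<And>j. 2 \<le> j \<Longrightarrow> b j = 0"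
      by (simp_all add: a_def b_def vec2_ge)
    have Bf: "ip 2 (gd 2 n x \<eta> t) b = \<eta> * (real na / real n * s1 * (\<gamma>*\<gamma> - \<gamma>/2) + 1 / real n * s2 * (2*\<gamma>*\<gamma>))"
      unfolding x_def a_def b_def s1_def s2_def margin_formula[OF na(3) na(4)]
      using na by (simp add: algebra_simps)
    have t1: "t \<ge> 1"
    proof (rule ccontr)
      assume "\<not> t \<ge> 1" hence "t = 0" by simp
      thus False using Bpos by (simp add: ip_def)
    qed
    have s1: "s1 \<ge> 1/2" unfolding s1_def using Sa_ge[OF na(3) na(4) sup t1] .
    have s2: "s2 \<le> real t" unfolding s2_def using Sb_le[OF na(3) na(4) sup] .
    have eta0: "\<eta> > 0" using eta na by linarith
    have P: "0 < real na / real n * s1 * (\<gamma>*\<gamma> - \<gamma>/2) + 1 / real n * s2 * (2*\<gamma>*\<gamma>)"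
      using Bpos eta0 Bf by (simp add: zero_less_mult_iff)
    hence P2: "0 < real na * s1 * (\<gamma>*\<gamma> - \<gamma>/2) + s2 * (2*\<gamma>*\<gamma>)"
      using na by (simp add: field_simps)
    have "\<gamma>*\<gamma> \<le> \<gamma> * (1/6)" using g by (intro mult_left_mono) auto
    hence neg: "\<gamma>*\<gamma> - \<gamma>/2 \<le> -\<gamma>/3" by simp
    have "real na * s1 * (\<gamma>*\<gamma> - \<gamma>/2) \<le> real na * s1 * (-\<gamma>/3)"
      using neg s1 by (intro mult_left_mono) auto
    also have "\<dots> \<le> real na * (1/2) * (-\<gamma>/3)"
      using s1 g by (intro mult_right_mono_neg mult_left_mono) auto
    finally have T1: "real na * s1 * (\<gamma>*\<gamma> - \<gamma>/2) \<le> - real na * \<gamma> / 6" by simp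
    have T2: "s2 * (2*\<gamma>*\<gamma>) \<le> real t * (2*\<gamma>*\<gamma>)" using s2 g by (intro mult_right_mono) auto
    have "real na * \<gamma> / 6 < real t * (2*\<gamma>*\<gamma>)" using P2 T1 T2 by linarith
    hence "real na < 12 * real t * \<gamma>" using g by (simp add: field_simps)
    moreover have "real n \<le> 2 * real na" using n by (simp add: na_def)
    ultimately have nt: "real n < 24 * real t * \<gamma>" by linarith
    have "1/1024 * (real n / \<gamma> + 1 / \<gamma>^2) \<le> 1/1024 * (2 * real n / \<gamma>)"
    proof -
      have "1 / \<gamma>^2 \<le> real n / \<gamma>" using big g by (simp add: field_simps power2_eq_square)
      thus ?thesis by simp
    qed
    also have "\<dots> \<le> real t" using nt g by (simp add: field_simps)
    finally show ?thesis .
  qed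
  show ?thesis
    by (rule exI[where x=2], rule exI[where x=x]) (use norms ls mm conv in auto)
qed

lemma key:
  fixes g al be p q sa sb e :: real and i j t :: nat
  assumes pal: "p*al = 1/4" and qbe: "q*be = 1/8" and al: "al \<ge> 1/3" and be: "be \<ge> 1/4"
    and p: "0 \<le> p" "p \<le> 1" and q: "0 \<le> q" "q \<le> 1"
    and sa: "\<bar>sa - (real i + 1/2)\<bar> \<le> e" and sb: "\<bar>sb - (real j + 1/2)\<bar> \<le> e"
    and e: "0 \<le> e" "e \<le> 1/12" and t: "i + j + 1 = t" and g: "g^2 * (real t + 1) \<le> 1/256"
  shows "(2*i \<ge> j \<longrightarrow> p* sa*(g*g + al*al) + q* sb*(g*g - al*be) \<ge> 1/256 \<and>
                         p* sa*(g*g - al*be) + q* sb*(g*g + be*be) \<le> -1/256) \<and>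
         (2*i < j \<longrightarrow> p* sa*(g*g + al*al) + q* sb*(g*g - al*be) \<le> -1/256 \<and>
                         p* sa*(g*g - al*be) + q* sb*(g*g + be*be) \<ge> 1/256)"
proof -
  define V where "V = sa/4 - sb/8"
  define W where "W = p* sa + q* sb"
  have pp: "p = 1/(4*al)" using pal al by (simp add: field_simps)
  have qq: "q = 1/(8*be)" using qbe be by (simp add: field_simps)
  have A: "p* sa*(g*g + al*al) + q* sb*(g*g - al*be) = g^2 * W + al * V"
    unfolding V_def W_def power2_eq_square pp qq using al be
    by (simp add: field_simps)
  have B: "p* sa*(g*g - al*be) + q* sb*(g*g + be*be) = g^2 * W - be * V"
    unfolding V_def W_def power2_eq_square pp qq using al be
    by (simp add: field_simps)
  have sa0: "0 \<le> sa" using sa e by (auto simp: abs_le_iff)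
  have sb0: "0 \<le> sb" using sb e by (auto simp: abs_le_iff)
  have W0: "0 \<le> W" unfolding W_def using sa0 sb0 p q by simp
  have "W \<le> sa + sb" unfolding W_def using sa0 sb0 p q
    by (intro add_mono) (simp_all add: mult_left_le_one_le)
  also have "\<dots> \<le> real t + 1" using sa sb e t by (auto simp: abs_le_iff)
  finally have Wt: "W \<le> real t + 1" .
  have gW0: "0 \<le> g^2 * W" using W0 by simp
  have "g^2 * W \<le> g^2 * (real t + 1)" using Wt by (intro mult_left_mono) auto
  hence gW: "g^2 * W \<le> 1/256" using g by linarith
  show ?thesis
  proof (intro conjI impI)
    assume "j \<le> 2*i"
    hence "real j \<le> 2 * real i" by linarith
    hence "V \<ge> 1/32" unfolding V_def using sa sb e by (auto simp: abs_le_iff)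
    hence aV: "al * V \<ge> 1/96" and bV: "be * V \<ge> 1/128"
      using al be mult_mono[of "1/3" al "1/32" V] mult_mono[of "1/4" be "1/32" V] by auto
    show "p* sa*(g*g + al*al) + q* sb*(g*g - al*be) \<ge> 1/256" unfolding A using aV gW0 by linarith
    show "p* sa*(g*g - al*be) + q* sb*(g*g + be*be) \<le> -1/256" unfolding B using bV gW by linarith
  next
    assume "2*i < j"
    hence "2 * real i + 1 \<le> real j" by linarith
    hence "-V \<ge> 1/32" unfolding V_def using sa sb e by (auto simp: abs_le_iff)
    hence aV: "al * (-V) \<ge> 1/96" and bV: "be * (-V) \<ge> 1/128"
      using al be mult_mono[of "1/3" al "1/32" "-V"] mult_mono[of "1/4" be "1/32" "-V"] by auto
    show "p* sa*(g*g + al*al) + q* sb*(g*g - al*be) \<le> -1/256" unfolding A using aV gW by simp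
    show "p* sa*(g*g - al*be) + q* sb*(g*g + be*be) \<ge> 1/256" unfolding B using bV gW0 by simp
  qed
qed

lemma case2:
  assumes g: "0 < \<gamma>" "\<gamma> \<le> 1/6" and n: "n \<ge> 2" and eta: "\<eta> \<ge> real n"
    and eta2: "\<eta> \<ge> 32 / \<gamma>^2" and small: "real n * \<gamma> < 1"
  shows "\<exists>(d::nat) (x::nat \<Rightarrow> nat \<Rightarrow> real).
           (\<forall>i<n. vnorm d (x i) \<le> 1) \<and>
           lin_sep d n x \<and>
           max_margin d n x = \<gamma> \<and>
           (\<forall>t::nat. logloss d n x (gd d n x \<eta> t) \<le> 1 / (8 * \<eta>) \<longrightarrow>
              real t \<ge> 1/1024 * (real n / \<gamma> + 1 / \<gamma>^2))"
proof -
  define nb where "nb = n div 2"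
  define na where "na = n - nb"
  define al where "al = real n / (4 * real na)"
  define be where "be = real n / (8 * real nb)"
  define a where "a = vec2 \<gamma> al"
  define b where "b = vec2 \<gamma> (-be)"
  define x where "x = xx na a b"
  define p where "p = real na / real n"
  define q where "q = real nb / real n"
  have nb1: "2 * real nb \<le> real n" "real n \<le> 2 * real nb + 1" unfolding nb_def by linarith+
  have nb2: "nb \<ge> 1" using n unfolding nb_def by linarith
  have na: "1 \<le> na" "na < n" "na \<le> n" "0 < n" "n - na = nb" "real na = real n - real nb"
    using n nb2 unfolding na_def nb_def by auto
  have nr: "real n \<ge> 2" using n by linarith
  have al: "1/3 \<le> al" "al \<le> 1/2" unfolding al_def using na nb1 nb2 nr by (simp_all add: field_simps)
  have be: "1/4 \<le> be" "be \<le> 1/2" unfolding be_def using na nb1 nb2 nr by (simp_all add: field_simps)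
  have pal: "p * al = 1/4" unfolding p_def al_def using na by (simp add: field_simps)
  have qbe: "q * be = 1/8" unfolding q_def be_def using na nb2 by (simp add: field_simps)
  have pq: "0 \<le> p" "p \<le> 1" "0 \<le> q" "q \<le> 1" unfolding p_def q_def using na nb1 nb2
    by (simp_all add: field_simps)
  have "\<gamma>^2 \<le> (1/6)^2" using g by (intro power_mono) auto
  hence g2: "\<gamma>^2 \<le> 1/36" by (simp add: power2_eq_square)
  have norms: "\<forall>i<n. vnorm 2 (x i) \<le> 1"
  proof (intro allI impI)
    fix i assume "i < n"
    have "al^2 \<le> (1/2)^2" "be^2 \<le> (1/2)^2" using al be by (intro power_mono; simp)+
    hence "\<gamma>^2 + al^2 \<le> 1" "\<gamma>^2 + (-be)^2 \<le> 1" using g2 by (simp_all add: power2_eq_square)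
    thus "vnorm 2 (x i) \<le> 1" unfolding x_def xx_def a_def b_def by (auto simp: vnorm_vec2)
  qed
  have ls: "lin_sep 2 n x"
    unfolding lin_sep_def
    by (rule exI[where x="vec2 1 0"]) (auto simp: x_def xx_def a_def b_def ip2 g)
  have mm: "max_margin 2 n x = \<gamma>" unfolding x_def a_def b_def
    by (rule maxmargin) (use na g al be in auto)
  have sup: "\<And>j. 2 \<le> j \<Longrightarrow> a j = 0" "\<And>j. 2 \<le> j \<Longrightarrow> b j = 0"
    by (simp_all add: a_def b_def vec2_ge)
  have eta0: "\<eta> > 0" using eta na by linarith
  define eps where "eps = 256 / \<eta>"
  have eps0: "eps \<ge> 0" unfolding eps_def using eta0 by simp
  have "256 / \<eta> \<le> 8 * \<gamma>^2" using eta2 eta0 g by (simp add: field_simps)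
  hence eps8: "eps \<le> 8 * \<gamma>^2" unfolding eps_def .
  have Af: "ip 2 (gd 2 n x \<eta> t) a = \<eta> * (p * Sa n na a b \<eta> t * (\<gamma>*\<gamma> + al*al)
          + q * Sb n na a b \<eta> t * (\<gamma>*\<gamma> - al*be))" for t
    unfolding x_def a_def b_def p_def q_def margin_formula[OF na(3) na(4)]
    using na by (simp add: algebra_simps)
  have Bf: "ip 2 (gd 2 n x \<eta> t) b = \<eta> * (p * Sa n na a b \<eta> t * (\<gamma>*\<gamma> - al*be)
          + q * Sb n na a b \<eta> t * (\<gamma>*\<gamma> + be*be))" for t
    unfolding x_def a_def b_def p_def q_def margin_formula[OF na(3) na(4)]
    using na by (simp add: algebra_simps)
  have SaS: "Sa n na a b \<eta> (Suc t) = Sa n na a b \<eta> t + sg (ip 2 (gd 2 n x \<eta> t) a)" for t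
    unfolding Sa_def x_def by simp
  have SbS: "Sb n na a b \<eta> (Suc t) = Sb n na a b \<eta> t + sg (ip 2 (gd 2 n x \<eta> t) b)" for t
    unfolding Sb_def x_def by simp
  have keyt: "(2*i \<ge> j \<longrightarrow> ip 2 (gd 2 n x \<eta> t) a \<ge> \<eta>/256 \<and> ip 2 (gd 2 n x \<eta> t) b \<le> -\<eta>/256) \<and>
              (2*i < j \<longrightarrow> ip 2 (gd 2 n x \<eta> t) a \<le> -\<eta>/256 \<and> ip 2 (gd 2 n x \<eta> t) b \<ge> \<eta>/256)"
    if sa: "\<bar>Sa n na a b \<eta> t - (real i + 1/2)\<bar> \<le> e" and sb: "\<bar>Sb n na a b \<eta> t - (real j + 1/2)\<bar> \<le> e"
      and e: "0 \<le> e" "e \<le> 1/12" and t: "i + j + 1 = t" and gt: "\<gamma>^2 * (real t + 1) \<le> 1/256"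
    for i j t e
  proof -
    note K = key[OF pal qbe al(1) be(1) pq sa sb e t gt]
    have m1: "\<eta> * (1/256) = \<eta>/256" "\<eta> * (-1/256) = -\<eta>/256" by simp_all
    show ?thesis unfolding Af Bf using K eta0
      by (smt (verit, best) m1 mult_left_mono)
  qed
  have inv: "\<forall>t. 1 \<le> t \<longrightarrow> \<gamma>^2 * (real t + 1) \<le> 1/256 \<longrightarrow>
      (\<exists>i j. i + j + 1 = t \<and> \<bar>Sa n na a b \<eta> t - (real i + 1/2)\<bar> \<le> (real t - 1) * eps
                      \<and> \<bar>Sb n na a b \<eta> t - (real j + 1/2)\<bar> \<le> (real t - 1) * eps)"
  proof (intro allI)
    fix t show "1 \<le> t \<longrightarrow> \<gamma>^2 * (real t + 1) \<le> 1/256 \<longrightarrow>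
      (\<exists>i j. i + j + 1 = t \<and> \<bar>Sa n na a b \<eta> t - (real i + 1/2)\<bar> \<le> (real t - 1) * eps
                      \<and> \<bar>Sb n na a b \<eta> t - (real j + 1/2)\<bar> \<le> (real t - 1) * eps)"
    proof (induction t)
      case 0 show ?case by simp
    next
      case (Suc t)
      show ?case
      proof (intro impI)
        assume gt1: "\<gamma>^2 * (real (Suc t) + 1) \<le> 1/256"
        show "\<exists>i j. i + j + 1 = Suc t \<and> \<bar>Sa n na a b \<eta> (Suc t) - (real i + 1/2)\<bar> \<le> (real (Suc t) - 1) * eps
                      \<and> \<bar>Sb n na a b \<eta> (Suc t) - (real j + 1/2)\<bar> \<le> (real (Suc t) - 1) * eps"
        proof (cases "t = 0")
          case True
          have "Sa n na a b \<eta> 1 = 1/2" "Sb n na a b \<eta> 1 = 1/2"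
            unfolding Sa_def Sb_def by (simp_all add: ip_def sg_0)
          thus ?thesis using True by (intro exI[where x=0]) simp
        next
          case False
          hence t1: "1 \<le> t" by simp
          have gt: "\<gamma>^2 * (real t + 1) \<le> 1/256"
            using gt1 by (smt (verit) mult_left_mono of_nat_Suc zero_le_power2)
          obtain i j where ij: "i + j + 1 = t" and sa: "\<bar>Sa n na a b \<eta> t - (real i + 1/2)\<bar> \<le> (real t - 1) * eps"
            and sb: "\<bar>Sb n na a b \<eta> t - (real j + 1/2)\<bar> \<le> (real t - 1) * eps"
            using Suc.IH t1 gt by blast
          have e0: "0 \<le> (real t - 1) * eps" using t1 eps0 by simp
          have "(real t - 1) * eps \<le> (real t + 1) * (8 * \<gamma>^2)"
            using eps8 eps0 t1 by (intro mult_mono) auto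
          hence e12: "(real t - 1) * eps \<le> 1/12" using gt by (simp add: algebra_simps)
          note K = keyt[OF sa sb e0 e12 ij gt]
          have sgA: "sg (ip 2 (gd 2 n x \<eta> t) a) \<le> eps" if "ip 2 (gd 2 n x \<eta> t) a \<ge> \<eta>/256"
            using sg_small[OF that] eta0 unfolding eps_def by simp
          have sgB: "sg (ip 2 (gd 2 n x \<eta> t) b) \<le> eps" if "ip 2 (gd 2 n x \<eta> t) b \<ge> \<eta>/256"
            using sg_small[OF that] eta0 unfolding eps_def by simp
          have sgA': "1 - sg (ip 2 (gd 2 n x \<eta> t) a) \<le> eps" if "ip 2 (gd 2 n x \<eta> t) a \<le> -(\<eta>/256)"
            using sg_big[OF that] eta0 unfolding eps_def by simp
          have sgB': "1 - sg (ip 2 (gd 2 n x \<eta> t) b) \<le> eps" if "ip 2 (gd 2 n x \<eta> t) b \<le> -(\<eta>/256)"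
            using sg_big[OF that] eta0 unfolding eps_def by simp
          have pos: "0 < sg (ip 2 (gd 2 n x \<eta> t) a)" "sg (ip 2 (gd 2 n x \<eta> t) a) \<le> 1"
            "0 < sg (ip 2 (gd 2 n x \<eta> t) b)" "sg (ip 2 (gd 2 n x \<eta> t) b) \<le> 1"
            by (simp_all add: sg_pos sg_le1)
          have st: "(real (Suc t) - 1) * eps = (real t - 1) * eps + eps" by (simp add: algebra_simps)
          show ?thesis
          proof (cases "j \<le> 2 * i")
            case True
            hence A: "ip 2 (gd 2 n x \<eta> t) a \<ge> \<eta>/256" and B: "ip 2 (gd 2 n x \<eta> t) b \<le> -(\<eta>/256)"
              using K by auto
            show ?thesis
              apply (rule exI[where x=i], rule exI[where x="Suc j"])
              using ij sa sb sgA[OF A] sgB'[OF B] pos unfolding SaS SbS st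
              by (auto simp: abs_le_iff)
          next
            case False
            hence A: "ip 2 (gd 2 n x \<eta> t) a \<le> -(\<eta>/256)" and B: "ip 2 (gd 2 n x \<eta> t) b \<ge> \<eta>/256"
              using K by auto
            show ?thesis
              apply (rule exI[where x="Suc i"], rule exI[where x=j])
              using ij sa sb sgA'[OF A] sgB[OF B] pos unfolding SaS SbS st
              by (auto simp: abs_le_iff)
          qed
        qed
      qed
    qed
  qed
  have conv: "real t \<ge> 1/1024 * (real n / \<gamma> + 1 / \<gamma>^2)"
    if L: "logloss 2 n x (gd 2 n x \<eta> t) \<le> 1 / (8 * \<eta>)" for t
  proof -
    have xa: "x 0 = a" unfolding x_def xx_def using na by simp
    have "\<not> (n - 1 < na)" using na by arith
    hence xb: "x (n-1) = b" unfolding x_def xx_def by simp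
    have Apos: "ip 2 (gd 2 n x \<eta> t) a > 0"
    proof (rule ccontr)
      assume "\<not> ?thesis"
      hence "logloss 2 n x (gd 2 n x \<eta> t) > 1 / (8 * \<eta>)"
        using xa na eta by (intro logloss_big[where j="0"]) auto
      thus False using L by linarith
    qed
    have Bpos: "ip 2 (gd 2 n x \<eta> t) b > 0"
    proof (rule ccontr)
      assume "\<not> ?thesis"
      hence "logloss 2 n x (gd 2 n x \<eta> t) > 1 / (8 * \<eta>)"
        using xb na eta by (intro logloss_big[where j="n-1"]) auto
      thus False using L by linarith
    qed
    have t1: "t \<ge> 1"
    proof (rule ccontr)
      assume "\<not> t \<ge> 1" hence "t = 0" by simp
      thus False using Bpos by (simp add: ip_def)
    qed
    have big: "\<gamma>^2 * (real t + 1) > 1/256"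
    proof (rule ccontr)
      assume "\<not> ?thesis"
      hence gt: "\<gamma>^2 * (real t + 1) \<le> 1/256" by simp
      obtain i j where ij: "i + j + 1 = t" and sa: "\<bar>Sa n na a b \<eta> t - (real i + 1/2)\<bar> \<le> (real t - 1) * eps"
            and sb: "\<bar>Sb n na a b \<eta> t - (real j + 1/2)\<bar> \<le> (real t - 1) * eps"
        using inv t1 gt by blast
      have e0: "0 \<le> (real t - 1) * eps" using t1 eps0 by simp
      have "(real t - 1) * eps \<le> (real t + 1) * (8 * \<gamma>^2)"
        using eps8 eps0 t1 by (intro mult_mono) auto
      hence e12: "(real t - 1) * eps \<le> 1/12" using gt by (simp add: algebra_simps)
      note K = keyt[OF sa sb e0 e12 ij gt]
      have "\<eta>/256 > 0" using eta0 by simp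
      thus False using K Apos Bpos by (cases "j \<le> 2*i") auto
    qed
    have "1/1024 * (real n / \<gamma> + 1 / \<gamma>^2) \<le> 1/1024 * (2 / \<gamma>^2)"
    proof -
      have "real n / \<gamma> \<le> 1 / \<gamma>^2" using small g by (simp add: field_simps power2_eq_square)
      thus ?thesis by simp
    qed
    also have "\<dots> \<le> real t"
    proof -
      have "\<gamma>^2 * (real t + 1) \<le> \<gamma>^2 * (2 * real t)" using t1 by (intro mult_left_mono) auto
      hence "1 \<le> real t * (\<gamma>^2 * 512)" using big by (simp add: algebra_simps)
      thus ?thesis using g by (simp add: field_simps)
    qed
    finally show ?thesis .
  qed
  show ?thesis
    by (rule exI[where x=2], rule exI[where x=x]) (use norms ls mm conv in auto)
qed

theorem theorem10:
  "\<exists>c::real. c > 0 \<and>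
     (\<forall>(\<gamma>::real) (n::nat) (\<eta>::real).
        0 < \<gamma> \<and> \<gamma> \<le> 1/6 \<and> n \<ge> 2 \<and>
        \<eta> \<ge> max (real n) (32 / \<gamma>^2 * ln (3 / \<gamma>)) \<longrightarrow>
        (\<exists>(d::nat) (x::nat \<Rightarrow> nat \<Rightarrow> real).
           (\<forall>i<n. vnorm d (x i) \<le> 1) \<and>
           lin_sep d n x \<and>
           max_margin d n x = \<gamma> \<and>
           (\<forall>t::nat. logloss d n x (gd d n x \<eta> t) \<le> 1 / (8 * \<eta>) \<longrightarrow>
              real t \<ge> c * (real n / \<gamma> + 1 / \<gamma>^2))))"
proof (rule exI[where x="1/1024"], intro conjI allI impI)
  show "(0::real) < 1/1024" by simp
  fix \<gamma> :: real and n :: nat and \<eta> :: real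
  assume H: "0 < \<gamma> \<and> \<gamma> \<le> 1/6 \<and> n \<ge> 2 \<and> \<eta> \<ge> max (real n) (32 / \<gamma>^2 * ln (3 / \<gamma>))"
  hence g: "0 < \<gamma>" "\<gamma> \<le> 1/6" and n: "n \<ge> 2" and eta: "\<eta> \<ge> real n"
    and eta1: "\<eta> \<ge> 32 / \<gamma>^2 * ln (3 / \<gamma>)" by auto
  have "18 \<le> 3 / \<gamma>" using g by (simp add: field_simps)
  hence "exp 1 \<le> 3 / \<gamma>" using exp_le by linarith
  hence "ln (exp 1) \<le> ln (3 / \<gamma>)" using g by (subst ln_le_cancel_iff) auto
  hence l1: "1 \<le> ln (3 / \<gamma>)" by simp
  have "32 / \<gamma>^2 * 1 \<le> 32 / \<gamma>^2 * ln (3 / \<gamma>)" using l1 g by (intro mult_left_mono) auto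
  hence eta2: "\<eta> \<ge> 32 / \<gamma>^2" using eta1 by linarith
  show "\<exists>(d::nat) (x::nat \<Rightarrow> nat \<Rightarrow> real).
           (\<forall>i<n. vnorm d (x i) \<le> 1) \<and>
           lin_sep d n x \<and>
           max_margin d n x = \<gamma> \<and>
           (\<forall>t::nat. logloss d n x (gd d n x \<eta> t) \<le> 1 / (8 * \<eta>) \<longrightarrow>
              real t \<ge> 1/1024 * (real n / \<gamma> + 1 / \<gamma>^2))"
  proof (cases "1 \<le> real n * \<gamma>")
    case True thus ?thesis using case1[OF g n eta] by blast
  next
    case False
    hence "real n * \<gamma> < 1" by linarith
    thus ?thesis by (rule case2[OF g n eta eta2])
  qed
qed

end
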